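(* If a Turing degree $\mathbf d$ is loquaciously high for descending sequences, then every $\Pi^1_1$ subset of $\omega$ is c.e. relative to $\mathbf d$.
   Context: Fix a standard effective listing $(\mathcal L_n:n\in\omega)$ of computable linear orders. A degree $\mathbf d$ is loquaciously high for descending sequences if there are $D\in\mathbf d$ and a Turing functional $\Phi$ such that $\Phi^D(n,k)$ converges for all $n,k$, and whenever $\mathcal L_n$ is ill-founded, $k\mapsto\Phi^D(n,k)$ is an infinite strictly descending sequence in $\mathcal L_n$. *)

theory Defs
  imports Main "HOL-Library.Nat_Bijection"
begin

datatype rf = Zero | Succ | Proj nat | Orc | Comp rf "rf list" | PrimRec rf rf | Mu rf

inductive eval :: "(nat \<Rightarrow> nat) \<Rightarrow> rf \<Rightarrow> nat list \<Rightarrow> nat \<Rightarrow> bool" for f where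
  ev_zero: "eval f Zero xs 0"
| ev_succ: "eval f Succ (x # xs) (Suc x)"
| ev_proj: "i < length xs \<Longrightarrow> eval f (Proj i) xs (xs ! i)"
| ev_orc: "eval f Orc (x # xs) (f x)"
| ev_comp: "length ys = length hs \<Longrightarrow> (\<forall>i < length hs. eval f (hs ! i) xs (ys ! i))
            \<Longrightarrow> eval f g ys z \<Longrightarrow> eval f (Comp g hs) xs z"
| ev_prec0: "eval f g xs y \<Longrightarrow> eval f (PrimRec g h) (0 # xs) y"
| ev_precS: "eval f (PrimRec g h) (n # xs) y \<Longrightarrow> eval f h (n # y # xs) z
            \<Longrightarrow> eval f (PrimRec g h) (Suc n # xs) z"
| ev_mu: "eval f g (n # xs) 0 \<Longrightarrow> (\<forall>m < n. \<exists>y. eval f g (m # xs) (Suc y))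
            \<Longrightarrow> eval f (Mu g) xs n"

definition chi :: "nat set \<Rightarrow> nat \<Rightarrow> nat" where
  "chi D x = (if x \<in> D then 1 else 0)"

text \<open>Effective (primitive recursive) Goedel numbering of programs.\<close>
fun enc :: "rf \<Rightarrow> nat" where
  "enc Zero = prod_encode (0, 0)"
| "enc Succ = prod_encode (1, 0)"
| "enc (Proj i) = prod_encode (2, i)"
| "enc Orc = prod_encode (3, 0)"
| "enc (Comp g hs) = prod_encode (4, prod_encode (enc g, list_encode (map enc hs)))"
| "enc (PrimRec g h) = prod_encode (5, prod_encode (enc g, enc h))"
| "enc (Mu g) = prod_encode (6, enc g)"

definition comp_rel :: "rf \<Rightarrow> nat rel" where
  "comp_rel p = {(x, y). eval (\<lambda>_. 0) p [x, y] 0}"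

definition total2 :: "rf \<Rightarrow> bool" where
  "total2 p \<longleftrightarrow> (\<forall>x y. \<exists>z. eval (\<lambda>_. 0) p [x, y] z)"

text \<open>L n: the strict order (pairs (x,y) meaning x <_L y) coded by index n:
  if n codes a program computing a total binary function whose zero set is a strict
  linear order on omega, L n is that order; otherwise L n is the empty order.\<close>
definition L :: "nat \<Rightarrow> nat rel" where
  "L n = (if \<exists>p. n = enc p \<and> total2 p \<and> strict_linear_order (comp_rel p)
          then comp_rel (THE p. n = enc p) else {})"

definition loquaciously_high_ds :: "nat set \<Rightarrow> bool" where
  "loquaciously_high_ds D \<longleftrightarrow>
     (\<exists>\<Phi> g. (\<forall>n k. eval (chi D) \<Phi> [n, k] (g n k)) \<and>
            (\<forall>n. \<not> wf (L n) \<longrightarrow> (\<forall>k. (g n (Suc k), g n k) \<in> L n)))"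

definition Pi11 :: "nat set \<Rightarrow> bool" where
  "Pi11 A \<longleftrightarrow> (\<exists>e. \<forall>n. n \<in> A \<longleftrightarrow> (\<forall>f. \<exists>y. eval f e [n] y))"

definition ce_in :: "nat set \<Rightarrow> nat set \<Rightarrow> bool" where
  "ce_in D A \<longleftrightarrow> (\<exists>e. \<forall>n. n \<in> A \<longleftrightarrow> (\<exists>y. eval (chi D) e [n] y))"

end

theory Submission
  imports Defs
begin

inductive_cases ev_ZeroE: "eval f Zero xs y"
inductive_cases ev_SuccE: "eval f Succ xs y"
inductive_cases ev_ProjE: "eval f (Proj i) xs y"
inductive_cases ev_OrcE: "eval f Orc xs y"
inductive_cases ev_CompE: "eval f (Comp g hs) xs y"
inductive_cases ev_PrimRecE: "eval f (PrimRec g h) xs y"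
inductive_cases ev_MuE: "eval f (Mu g) xs y"

lemma eval_det: "eval f p xs y \<Longrightarrow> eval f p xs z \<Longrightarrow> y = z"
proof (induction arbitrary: z rule: eval.induct)
  case (ev_comp ys hs xs g y)
  from ev_comp.prems obtain ys' where l: "length ys' = length hs"
    and h: "\<forall>i<length hs. eval f (hs ! i) xs (ys' ! i)" and g: "eval f g ys' z"
    by (rule ev_CompE)
  have "\<forall>i<length hs. ys ! i = ys' ! i"
  proof (intro allI impI)
    fix i assume "i < length hs"
    then show "ys ! i = ys' ! i" using h ev_comp.IH(1) by blast
  qed
  then have "ys' = ys" using l ev_comp.hyps(1)
    by (simp add: nth_equalityI)
  then show ?case using g ev_comp.IH(2) by blast
next
  case (ev_mu g n xs)
  from ev_mu.prems have a: "eval f g (z # xs) 0" and b: "\<forall>m<z. \<exists>y. eval f g (m # xs) (Suc y)"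
    by (auto elim: ev_MuE)
  show ?case
  proof (rule ccontr)
    assume "n \<noteq> z"
    then consider "n < z" | "z < n" by linarith
    then show False
    proof cases
      case 1 then obtain y where y: "eval f g (n # xs) (Suc y)" using b by blast
      have "0 = Suc y" using ev_mu.IH(1) y by blast
      then show False by simp
    next
      case 2 then obtain y where "Suc y = 0"
        using ev_mu.IH(2) a by blast
      then show False by simp
    qed
  qed
next
  case (ev_zero xs) then show ?case by (auto elim: ev_ZeroE)
next
  case (ev_succ x xs) then show ?case by (auto elim: ev_SuccE)
next
  case (ev_proj i xs) then show ?case by (auto elim: ev_ProjE)
next
  case (ev_orc x xs) then show ?case by (auto elim: ev_OrcE)
next
  case (ev_prec0 g xs y h)
  from ev_prec0.prems show ?case
    by (cases rule: ev_PrimRecE) (use ev_prec0.IH in auto)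
next
  case (ev_precS g h n xs y z')
  from ev_precS.prems obtain y' where "eval f (PrimRec g h) (n # xs) y'" "eval f h (n # y' # xs) z"
    by (cases rule: ev_PrimRecE) auto
  then show ?case using ev_precS.IH by blast
qed

definition rc :: "(nat \<Rightarrow> nat) \<Rightarrow> nat \<Rightarrow> (nat list \<Rightarrow> nat) \<Rightarrow> bool" where
  "rc f k F \<longleftrightarrow> (\<exists>p. \<forall>xs. length xs = k \<longrightarrow> eval f p xs (F xs))"

fun cprog :: "nat \<Rightarrow> rf" where
  "cprog 0 = Zero"
| "cprog (Suc c) = Comp Succ [cprog c]"

lemma eval_cprog: "eval f (cprog c) xs c"
proof (induction c)
  case 0 then show ?case by (simp add: ev_zero)
next
  case (Suc c)
  have "eval f Succ [c] (Suc c)" by (rule ev_succ)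
  then show ?case using Suc by (auto intro!: ev_comp[where ys="[c]"])
qed

lemma rc_const: "rc f k (\<lambda>xs. c)"
  unfolding rc_def using eval_cprog by blast

lemma rc_proj: "i < k \<Longrightarrow> rc f k (\<lambda>xs. xs ! i)"
  unfolding rc_def using ev_proj by blast

lemma rc_succ1: "rc f 1 (\<lambda>xs. Suc (xs ! 0))"
  unfolding rc_def
proof (intro exI allI impI)
  fix xs :: "nat list" assume "length xs = 1"
  then obtain x where "xs = [x]" by (cases xs) auto
  then show "eval f Succ xs (Suc (xs ! 0))" using ev_succ by simp
qed

lemma rc_ext: "rc f k F \<Longrightarrow> (\<And>xs. length xs = k \<Longrightarrow> F xs = F' xs) \<Longrightarrow> rc f k F'"
  unfolding rc_def by metis

lemma rc_comp:
  assumes g: "rc f m G" and h: "\<forall>i<m. rc f k (H i)"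
  shows "rc f k (\<lambda>xs. G (map (\<lambda>i. H i xs) [0..<m]))"
proof -
  obtain g where g: "\<forall>ys. length ys = m \<longrightarrow> eval f g ys (G ys)" using g unfolding rc_def by blast
  have "\<forall>i. \<exists>p. i < m \<longrightarrow> (\<forall>xs. length xs = k \<longrightarrow> eval f p xs (H i xs))"
    using h unfolding rc_def by blast
  then obtain P where P: "\<And>i xs. i < m \<Longrightarrow> length xs = k \<Longrightarrow> eval f (P i) xs (H i xs)"
    by metis
  show ?thesis unfolding rc_def
  proof (intro exI allI impI)
    fix xs :: "nat list" assume l: "length xs = k"
    show "eval f (Comp g (map P [0..<m])) xs (G (map (\<lambda>i. H i xs) [0..<m]))"
      by (rule ev_comp[where ys="map (\<lambda>i. H i xs) [0..<m]"]) (use P l g in auto)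
  qed
qed

lemma rc_comp1:
  assumes "rc f 1 G" "rc f k A"
  shows "rc f k (\<lambda>xs. G [A xs])"
proof -
  have "rc f k (\<lambda>xs. G (map (\<lambda>i. (\<lambda>i. A) i xs) [0..<1]))"
    by (rule rc_comp) (use assms in auto)
  then show ?thesis by simp
qed

lemma rc_comp2:
  assumes "rc f 2 G" "rc f k A" "rc f k B"
  shows "rc f k (\<lambda>xs. G [A xs, B xs])"
proof -
  have "rc f k (\<lambda>xs. G (map (\<lambda>i. (\<lambda>i. if i = 0 then A else B) i xs) [0..<2]))"
    by (rule rc_comp) (use assms in auto)
  then show ?thesis by (simp add: upt_rec)
qed

lemma rc_comp3:
  assumes "rc f 3 G" "rc f k A" "rc f k B" "rc f k C"
  shows "rc f k (\<lambda>xs. G [A xs, B xs, C xs])"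
proof -
  have "rc f k (\<lambda>xs. G (map (\<lambda>i. (\<lambda>i. if i = 0 then A else if i = 1 then B else C) i xs) [0..<3]))"
    by (rule rc_comp) (use assms in auto)
  then show ?thesis by (simp add: upt_rec)
qed

lemma rc_prec:
  assumes g: "rc f k G" and h: "rc f (Suc (Suc k)) H"
    and F0: "\<And>xs. length xs = k \<Longrightarrow> F (0 # xs) = G xs"
    and FS: "\<And>n xs. length xs = k \<Longrightarrow> F (Suc n # xs) = H (n # F (n # xs) # xs)"
  shows "rc f (Suc k) F"
proof -
  obtain g where g: "\<forall>ys. length ys = k \<longrightarrow> eval f g ys (G ys)" using g unfolding rc_def by blast
  obtain h where h: "\<forall>ys. length ys = Suc (Suc k) \<longrightarrow> eval f h ys (H ys)" using h unfolding rc_def by blast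
  have *: "eval f (PrimRec g h) (n # xs) (F (n # xs))" if l: "length xs = k" for n xs
  proof (induction n)
    case 0 then show ?case using g l F0 by (auto intro: ev_prec0)
  next
    case (Suc n) then show ?case using h l FS by (auto intro: ev_precS)
  qed
  show ?thesis unfolding rc_def
  proof (intro exI allI impI)
    fix xs :: "nat list" assume "length xs = Suc k"
    then obtain n ys where "xs = n # ys" "length ys = k" by (cases xs) auto
    then show "eval f (PrimRec g h) xs (F xs)" using * by simp
  qed
qed

lemma rc_prec':
  assumes "k1 = Suc k" "k2 = Suc (Suc k)" "rc f k G" "rc f k2 H"
    "\<And>xs. length xs = k \<Longrightarrow> F (0 # xs) = G xs"
    "\<And>n xs. length xs = k \<Longrightarrow> F (Suc n # xs) = H (n # F (n # xs) # xs)"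
  shows "rc f k1 F"
  using rc_prec[of f k G H F] assms by blast

lemma rc_mu:
  assumes g: "rc f (Suc k) G" and ex: "\<And>xs. length xs = k \<Longrightarrow> \<exists>n. G (n # xs) = 0"
  shows "rc f k (\<lambda>xs. LEAST n. G (n # xs) = 0)"
proof -
  obtain g where g: "\<forall>ys. length ys = Suc k \<longrightarrow> eval f g ys (G ys)" using g unfolding rc_def by blast
  show ?thesis unfolding rc_def
  proof (intro exI allI impI)
    fix xs :: "nat list" assume l: "length xs = k"
    let ?n = "LEAST n. G (n # xs) = 0"
    have a: "G (?n # xs) = 0" using ex[OF l] by (rule LeastI_ex)
    have b: "\<forall>m<?n. \<exists>y. eval f g (m # xs) (Suc y)"
    proof (intro allI impI)
      fix m assume "m < ?n"
      then have "G (m # xs) \<noteq> 0" using not_less_Least by blast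
      then obtain y where "G (m # xs) = Suc y" using not0_implies_Suc by blast
      then show "\<exists>y. eval f g (m # xs) (Suc y)" using g l by (metis length_Cons)
    qed
    have "eval f g (?n # xs) 0" using a g l by (metis length_Cons)
    then show "eval f (Mu g) xs ?n"
      by (rule ev_mu) (use b in auto)
  qed
qed

lemma rc_Suc: "rc f k A \<Longrightarrow> rc f k (\<lambda>xs. Suc (A xs))"
  using rc_comp1[OF rc_succ1] by simp

lemma rc_add2: "rc f 2 (\<lambda>l. l ! 0 + l ! 1)"
proof (rule rc_prec'[where k=1 and G="\<lambda>xs. xs ! 0" and H="\<lambda>l. Suc (l ! 1)"])
  show "rc f 1 (\<lambda>xs. xs ! 0)" by (rule rc_proj) simp
  show "rc f 3 (\<lambda>l. Suc (l ! 1))" by (rule rc_Suc, rule rc_proj) simp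
qed auto

lemma rc_add: "rc f k A \<Longrightarrow> rc f k B \<Longrightarrow> rc f k (\<lambda>xs. A xs + B xs)"
  using rc_comp2[OF rc_add2] by simp

lemma rc_pred1: "rc f 1 (\<lambda>l. l ! 0 - 1)"
proof (rule rc_prec'[where k=0 and G="\<lambda>xs. 0" and H="\<lambda>l. l ! 0"])
  show "rc f 0 (\<lambda>xs. 0)" by (rule rc_const)
  show "rc f 2 (\<lambda>l. l ! 0)" by (rule rc_proj) simp
qed auto

lemma rc_pred: "rc f k A \<Longrightarrow> rc f k (\<lambda>xs. A xs - 1)"
  using rc_comp1[OF rc_pred1] by simp

lemma rc_subr: "rc f 2 (\<lambda>l. l ! 1 - l ! 0)"
proof (rule rc_prec'[where k=1 and G="\<lambda>xs. xs ! 0" and H="\<lambda>l. l ! 1 - 1"])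
  show "rc f 1 (\<lambda>xs. xs ! 0)" by (rule rc_proj) simp
  show "rc f 3 (\<lambda>l. l ! 1 - 1)" by (rule rc_pred, rule rc_proj) simp
qed auto

lemma rc_sub: "rc f k A \<Longrightarrow> rc f k B \<Longrightarrow> rc f k (\<lambda>xs. A xs - B xs)"
  using rc_comp2[OF rc_subr, where A=B and B=A] by simp

lemma rc_mul2: "rc f 2 (\<lambda>l. l ! 0 * l ! 1)"
proof (rule rc_prec'[where k=1 and G="\<lambda>xs. 0" and H="\<lambda>l. l ! 1 + l ! 2"])
  show "rc f 1 (\<lambda>xs. 0)" by (rule rc_const)
  show "rc f 3 (\<lambda>l. l ! 1 + l ! 2)" by (intro rc_add rc_proj) simp_all
qed auto

lemma rc_mul: "rc f k A \<Longrightarrow> rc f k B \<Longrightarrow> rc f k (\<lambda>xs. A xs * B xs)"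
  using rc_comp2[OF rc_mul2] by simp

lemma rc_ifz3: "rc f 3 (\<lambda>l. if l ! 0 = 0 then l ! 1 else l ! 2)"
proof (rule rc_prec'[where k=2 and G="\<lambda>xs. xs ! 0" and H="\<lambda>l. l ! 3"])
  show "rc f 2 (\<lambda>xs. xs ! 0)" by (rule rc_proj) simp
  show "rc f 4 (\<lambda>l. l ! 3)" by (rule rc_proj) simp
qed auto

lemma rc_ifz: "rc f k C \<Longrightarrow> rc f k A \<Longrightarrow> rc f k B \<Longrightarrow> rc f k (\<lambda>xs. if C xs = 0 then A xs else B xs)"
proof -
  assume "rc f k C" "rc f k A" "rc f k B"
  then have "rc f k (\<lambda>xs. (\<lambda>l. if l ! 0 = 0 then l ! 1 else l ! 2) [C xs, A xs, B xs])"
    by (intro rc_comp3[OF rc_ifz3])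
  then show ?thesis by (simp cong: if_cong)
qed

definition rcp :: "(nat \<Rightarrow> nat) \<Rightarrow> nat \<Rightarrow> (nat list \<Rightarrow> bool) \<Rightarrow> bool" where
  "rcp f k P \<longleftrightarrow> rc f k (\<lambda>xs. if P xs then 0 else 1)"

lemma rc_if: assumes "rcp f k P" "rc f k A" "rc f k B"
  shows "rc f k (\<lambda>xs. if P xs then A xs else B xs)"
proof -
  have "rc f k (\<lambda>xs. if (if P xs then 0 else 1) = (0::nat) then A xs else B xs)"
    using rc_ifz assms unfolding rcp_def by blast
  then show ?thesis by (rule rc_ext) simp
qed

lemma rcp_ext: "rcp f k P \<Longrightarrow> (\<And>xs. length xs = k \<Longrightarrow> P xs = P' xs) \<Longrightarrow> rcp f k P'"
  unfolding rcp_def by (erule rc_ext) simp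

lemma rcp_const: "rcp f k (\<lambda>xs. b)"
  unfolding rcp_def by (rule rc_const)

lemma rcp_I: "rc f k C \<Longrightarrow> (\<And>xs. length xs = k \<Longrightarrow> (C xs = 0) = P xs) \<Longrightarrow> rcp f k P"
  unfolding rcp_def
  by (rule rc_ext, rule rc_ifz[where C=C and A="\<lambda>_. 0" and B="\<lambda>_. 1"]) (auto intro: rc_const)

lemma rcp_le: "rc f k A \<Longrightarrow> rc f k B \<Longrightarrow> rcp f k (\<lambda>xs. A xs \<le> B xs)"
  by (rule rcp_I[where C="\<lambda>xs. A xs - B xs"]) (auto intro: rc_sub)

lemma rcp_less: "rc f k A \<Longrightarrow> rc f k B \<Longrightarrow> rcp f k (\<lambda>xs. A xs < B xs)"
  by (rule rcp_I[where C="\<lambda>xs. Suc (A xs) - B xs"]) (auto intro: rc_sub rc_Suc)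

lemma rcp_not: "rcp f k P \<Longrightarrow> rcp f k (\<lambda>xs. \<not> P xs)"
  unfolding rcp_def
  by (rule rc_ext, rule rc_ifz[where C="\<lambda>xs. if P xs then 0 else 1" and A="\<lambda>_. 1" and B="\<lambda>_. 0"])
     (auto intro: rc_const)

lemma rcp_eq: "rc f k A \<Longrightarrow> rc f k B \<Longrightarrow> rcp f k (\<lambda>xs. A xs = B xs)"
  by (rule rcp_I[where C="\<lambda>xs. (A xs - B xs) + (B xs - A xs)"]) (auto intro: rc_sub rc_add)

lemma rcp_conj: "rcp f k P \<Longrightarrow> rcp f k Q \<Longrightarrow> rcp f k (\<lambda>xs. P xs \<and> Q xs)"
  unfolding rcp_def
  by (rule rc_ext, rule rc_if[where P=P and A="\<lambda>xs. if Q xs then 0 else 1" and B="\<lambda>_. 1"])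
     (auto simp: rcp_def intro: rc_const)

lemma rcp_disj: "rcp f k P \<Longrightarrow> rcp f k Q \<Longrightarrow> rcp f k (\<lambda>xs. P xs \<or> Q xs)"
  using rcp_not[of f k "\<lambda>xs. \<not> P xs \<and> \<not> Q xs"] rcp_conj[OF rcp_not rcp_not]
  by simp

lemma rcp_imp: "rcp f k P \<Longrightarrow> rcp f k Q \<Longrightarrow> rcp f k (\<lambda>xs. P xs \<longrightarrow> Q xs)"
  using rcp_disj[OF rcp_not] by simp

lemma rc_least:
  assumes "rcp f (Suc k) Q" "\<And>xs. length xs = k \<Longrightarrow> \<exists>n. Q (n # xs)"
  shows "rc f k (\<lambda>xs. LEAST n. Q (n # xs))"
proof -
  have "rc f k (\<lambda>xs. LEAST n. (\<lambda>xs. if Q xs then 0 else 1) (n # xs) = (0::nat))"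
    by (rule rc_mu) (use assms in \<open>auto simp: rcp_def\<close>)
  moreover have "\<And>xs. (LEAST n. (\<lambda>xs. if Q xs then 0 else 1) (n # xs) = (0::nat)) = (LEAST n. Q (n # xs))"
    by simp
  ultimately show ?thesis by simp
qed

lemma rc_shift: "rc f k B \<Longrightarrow> rc f (Suc k) (\<lambda>l. B (tl l))"
proof -
  assume "rc f k B"
  then have "rc f (Suc k) (\<lambda>l. B (map (\<lambda>i. (\<lambda>i l. l ! Suc i) i l) [0..<k]))"
    by (intro rc_comp) (auto intro: rc_proj)
  then show ?thesis
  proof (rule rc_ext)
    fix l :: "nat list" assume "length l = Suc k"
    then have "map (\<lambda>i. l ! Suc i) [0..<k] = tl l"
      by (intro nth_equalityI) (auto simp: nth_tl)
    then show "B (map (\<lambda>i. (\<lambda>i l. l ! Suc i) i l) [0..<k]) = B (tl l)" by simp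
  qed
qed

lemma rcp_shift: "rcp f k B \<Longrightarrow> rcp f (Suc k) (\<lambda>l. B (tl l))"
  unfolding rcp_def by (drule rc_shift) simp

lemma rcp_ball:
  assumes B: "rc f k B" and Q: "rcp f (Suc k) Q"
  shows "rcp f k (\<lambda>xs. \<forall>i<B xs. Q (i # xs))"
proof -
  have "rcp f (Suc k) (\<lambda>l. l ! 0 = B (tl l) \<or> \<not> Q l)"
    by (intro rcp_disj rcp_eq rcp_not rc_proj rc_shift B Q) simp
  then have "rc f k (\<lambda>xs. LEAST n. (\<lambda>l. l ! 0 = B (tl l) \<or> \<not> Q l) (n # xs))"
    by (rule rc_least) auto
  then have "rc f k (\<lambda>xs. LEAST n. n = B xs \<or> \<not> Q (n # xs))" by simp
  then have "rcp f k (\<lambda>xs. (LEAST n. n = B xs \<or> \<not> Q (n # xs)) = B xs)"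
    by (intro rcp_eq B)
  then show ?thesis
  proof (rule rcp_ext)
    fix xs :: "nat list"
    let ?L = "LEAST n. n = B xs \<or> \<not> Q (n # xs)"
    have ex: "\<exists>n. n = B xs \<or> \<not> Q (n # xs)" by blast
    have le: "?L \<le> B xs" by (rule Least_le) simp
    show "(?L = B xs) = (\<forall>i<B xs. Q (i # xs))"
    proof
      assume "?L = B xs"
      show "\<forall>i<B xs. Q (i # xs)"
      proof (intro allI impI)
        fix i assume "i < B xs"
        then have "i < ?L" using \<open>?L = B xs\<close> by simp
        then have "\<not> (i = B xs \<or> \<not> Q (i # xs))" by (rule not_less_Least)
        then show "Q (i # xs)" by simp
      qed
    next
      assume a: "\<forall>i<B xs. Q (i # xs)"
      show "?L = B xs"
      proof (rule ccontr)
        assume "?L \<noteq> B xs"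
        then have "?L < B xs" using le by simp
        moreover have "?L = B xs \<or> \<not> Q (?L # xs)" using LeastI_ex[OF ex] .
        ultimately show False using a by auto
      qed
    qed
  qed
qed

lemma rcp_bex:
  assumes B: "rc f k B" and Q: "rcp f (Suc k) Q"
  shows "rcp f k (\<lambda>xs. \<exists>i<B xs. Q (i # xs))"
  using rcp_not[OF rcp_ball[OF B rcp_not[OF Q]]] by simp

lemma rc_tri1: "rc f 1 (\<lambda>l. triangle (l ! 0))"
proof (rule rc_prec'[where k=0 and G="\<lambda>xs. 0" and H="\<lambda>l. l ! 1 + Suc (l ! 0)"])
  show "rc f 0 (\<lambda>xs. 0)" by (rule rc_const)
  show "rc f 2 (\<lambda>l. l ! 1 + Suc (l ! 0))" by (intro rc_add rc_Suc rc_proj) simp_all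
qed auto

lemma rc_tri: "rc f k A \<Longrightarrow> rc f k (\<lambda>xs. triangle (A xs))"
  using rc_comp1[OF rc_tri1] by simp

lemma rc_penc: "rc f k A \<Longrightarrow> rc f k B \<Longrightarrow> rc f k (\<lambda>xs. prod_encode (A xs, B xs))"
  unfolding prod_encode_def by (simp add: rc_add rc_tri)

lemma tri_mono: "i \<le> j \<Longrightarrow> triangle i \<le> triangle j"
  by (induction j) (auto simp: le_Suc_eq)

definition sd :: "nat \<Rightarrow> nat" where "sd m = (LEAST s. m < triangle (Suc s))"

lemma prod_decode_sd:
  "prod_decode m = (m - triangle (sd m), sd m - (m - triangle (sd m)))"
proof -
  obtain a b where ab: "prod_decode m = (a, b)" by (cases "prod_decode m")
  have "prod_encode (a, b) = m" using prod_decode_inverse[of m] ab by simp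
  then have m: "m = triangle (a + b) + a" by (simp add: prod_encode_def)
  have "sd m = a + b" unfolding sd_def
  proof (rule Least_equality)
    show "m < triangle (Suc (a + b))" using m by simp
  next
    fix s assume "m < triangle (Suc s)"
    then show "a + b \<le> s"
      using tri_mono[of "Suc s" "a + b"] m by linarith
  qed
  then have "m - triangle (sd m) = a" "sd m - (m - triangle (sd m)) = b" using m by simp_all
  then show ?thesis using ab by simp
qed

lemma rc_sd: assumes A: "rc f k A" shows "rc f k (\<lambda>xs. sd (A xs))"
proof -
  have "rcp f (Suc k) (\<lambda>l. A (tl l) < triangle (Suc (l ! 0)))"
    by (intro rcp_less rc_shift A rc_tri rc_Suc rc_proj) simp
  then have "rc f k (\<lambda>xs. LEAST s. (\<lambda>l. A (tl l) < triangle (Suc (l ! 0))) (s # xs))"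
  proof (rule rc_least)
    fix xs :: "nat list"
    have "A xs < triangle (Suc (A xs))" by simp
    then show "\<exists>n. (\<lambda>l. A (tl l) < triangle (Suc (l ! 0))) (n # xs)"
      by (intro exI[of _ "A xs"]) simp
  qed
  then show ?thesis by (simp add: sd_def)
qed

lemma rc_fst_dec: "rc f k A \<Longrightarrow> rc f k (\<lambda>xs. fst (prod_decode (A xs)))"
  unfolding prod_decode_sd fst_conv by (intro rc_sub rc_tri rc_sd)

lemma rc_snd_dec: "rc f k A \<Longrightarrow> rc f k (\<lambda>xs. snd (prod_decode (A xs)))"
  unfolding prod_decode_sd snd_conv by (intro rc_sub rc_tri rc_sd)

definition hdc :: "nat \<Rightarrow> nat" where "hdc x = fst (prod_decode (x - 1))"
definition tlc :: "nat \<Rightarrow> nat" where "tlc x = snd (prod_decode (x - 1))"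

lemma rc_hdc: "rc f k A \<Longrightarrow> rc f k (\<lambda>xs. hdc (A xs))"
  unfolding hdc_def by (intro rc_fst_dec rc_pred)

lemma rc_tlc: "rc f k A \<Longrightarrow> rc f k (\<lambda>xs. tlc (A xs))"
  unfolding tlc_def by (intro rc_snd_dec rc_pred)

lemma rc_funpow2:
  assumes g: "rc f 1 (\<lambda>l. g (l ! 0))"
  shows "rc f 2 (\<lambda>l. (g ^^ (l ! 0)) (l ! 1))"
proof (rule rc_prec'[where k=1 and G="\<lambda>xs. xs ! 0" and H="\<lambda>l. g (l ! 1)"])
  show "rc f 1 (\<lambda>xs. xs ! 0)" by (rule rc_proj) simp
  have "rc f 3 (\<lambda>xs. (\<lambda>l. g (l ! 0)) [xs ! 1])" by (rule rc_comp1[OF g], rule rc_proj) simp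
  then show "rc f 3 (\<lambda>l. g (l ! 1))" by simp
qed auto

lemma rc_itl: "rc f k A \<Longrightarrow> rc f k B \<Longrightarrow> rc f k (\<lambda>xs. (tlc ^^ (A xs)) (B xs))"
proof -
  assume A: "rc f k A" and B: "rc f k B"
  have "rc f 1 (\<lambda>l. tlc (l ! 0))" by (intro rc_tlc rc_proj) simp
  then have "rc f 2 (\<lambda>l. (tlc ^^ (l ! 0)) (l ! 1))" by (rule rc_funpow2)
  from rc_comp2[OF this A B] show ?thesis by simp
qed

lemma list_decode_tlc: "list_decode (tlc y) = tl (list_decode y)"
proof (cases y)
  case 0
  have "prod_decode 0 = (0, 0)" using prod_encode_inverse[of "(0,0)"] by (simp add: prod_encode_def)
  then show ?thesis using 0 by (simp add: tlc_def)
next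
  case (Suc n) then show ?thesis by (simp add: tlc_def split: prod.split)
qed

lemma list_decode_hdc: "list_decode y \<noteq> [] \<Longrightarrow> hd (list_decode y) = hdc y"
  by (cases y) (auto simp: hdc_def split: prod.split)

lemma list_decode_eq_Nil: "list_decode y = [] \<longleftrightarrow> y = 0"
  by (cases y) (auto split: prod.split)

lemma list_decode_itl: "list_decode ((tlc ^^ i) x) = drop i (list_decode x)"
  by (induction i) (auto simp: list_decode_tlc drop_Suc tl_drop)

lemma len_code: "length (list_decode x) = (LEAST i. (tlc ^^ i) x = 0)"
proof (rule sym, rule Least_equality)
  show "(tlc ^^ length (list_decode x)) x = 0"
    using list_decode_itl[of "length (list_decode x)" x] list_decode_eq_Nil by simp
next
  fix i assume "(tlc ^^ i) x = 0"
  then have "drop i (list_decode x) = []" using list_decode_itl[of i x] by simp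
  then show "length (list_decode x) \<le> i" by simp
qed

lemma rc_len: assumes A: "rc f k A" shows "rc f k (\<lambda>xs. length (list_decode (A xs)))"
proof -
  have "rcp f (Suc k) (\<lambda>l. (tlc ^^ (l ! 0)) (A (tl l)) = 0)"
    by (intro rcp_eq rc_itl rc_proj rc_shift A rc_const) simp
  then have "rc f k (\<lambda>xs. LEAST i. (\<lambda>l. (tlc ^^ (l ! 0)) (A (tl l)) = 0) (i # xs))"
  proof (rule rc_least)
    fix xs :: "nat list"
    show "\<exists>n. (\<lambda>l. (tlc ^^ (l ! 0)) (A (tl l)) = 0) (n # xs)"
      using list_decode_itl[of "length (list_decode (A xs))" "A xs"] list_decode_eq_Nil by auto
  qed
  then show ?thesis by (simp add: len_code)
qed

definition nthc :: "nat \<Rightarrow> nat \<Rightarrow> nat" where "nthc x i = hdc ((tlc ^^ i) x)"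

lemma nthc_correct: "i < length (list_decode x) \<Longrightarrow> list_decode x ! i = nthc x i"
proof -
  assume i: "i < length (list_decode x)"
  have "list_decode ((tlc ^^ i) x) = drop i (list_decode x)" by (rule list_decode_itl)
  moreover have "drop i (list_decode x) \<noteq> []" using i by simp
  ultimately have "hdc ((tlc ^^ i) x) = hd (drop i (list_decode x))"
    using list_decode_hdc by metis
  then show ?thesis using i by (simp add: nthc_def hd_drop_conv_nth)
qed

lemma rc_nthc: "rc f k A \<Longrightarrow> rc f k B \<Longrightarrow> rc f k (\<lambda>xs. nthc (A xs) (B xs))"
  unfolding nthc_def by (intro rc_hdc rc_itl)

fun beval :: "nat list \<Rightarrow> nat \<Rightarrow> rf \<Rightarrow> nat list \<Rightarrow> nat" where
  "beval \<sigma> s Zero xs = 1"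
| "beval \<sigma> s Succ xs = (case xs of [] \<Rightarrow> 0 | x # _ \<Rightarrow> Suc (Suc x))"
| "beval \<sigma> s (Proj i) xs = (if i < length xs then Suc (xs ! i) else 0)"
| "beval \<sigma> s Orc xs = (case xs of [] \<Rightarrow> 0 | x # _ \<Rightarrow> if x < length \<sigma> then Suc (\<sigma> ! x) else 0)"
| "beval \<sigma> s (Comp g hs) xs = (let ys = map (\<lambda>h. beval \<sigma> s h xs) hs in
     if 0 \<in> set ys then 0 else beval \<sigma> s g (map (\<lambda>y. y - 1) ys))"
| "beval \<sigma> s (PrimRec g h) xs = (case xs of [] \<Rightarrow> 0 | n # ys \<Rightarrow>
     rec_nat (beval \<sigma> s g ys) (\<lambda>m r. if r = 0 then 0 else beval \<sigma> s h (m # (r - 1) # ys)) n)"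
| "beval \<sigma> s (Mu g) xs = (let n = (LEAST n. n = s \<or> beval \<sigma> s g (n # xs) \<le> 1) in
     if n < s \<and> beval \<sigma> s g (n # xs) = 1 then Suc n else 0)"

lemma beval_mono: "beval \<sigma> s p xs = Suc y \<Longrightarrow> s \<le> t \<Longrightarrow> beval (\<sigma> @ \<rho>) t p xs = Suc y"
proof (induction p arbitrary: xs y)
  case Zero then show ?case by simp
next
  case Succ then show ?case by (simp split: list.splits)
next
  case (Proj i) then show ?case by (simp split: if_splits)
next
  case Orc then show ?case by (auto simp: nth_append split: list.splits if_splits)
next
  case (Comp g hs)
  let ?V = "map (\<lambda>h. beval \<sigma> s h xs) hs"
  have nz: "0 \<notin> set ?V" and gv: "beval \<sigma> s g (map (\<lambda>y. y - 1) ?V) = Suc y"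
    using Comp.prems(1) by (simp_all add: Let_def split: if_splits)
  have E: "map (\<lambda>h. beval (\<sigma> @ \<rho>) t h xs) hs = ?V"
  proof (rule map_cong[OF refl])
    fix h assume h: "h \<in> set hs"
    then have "beval \<sigma> s h xs \<noteq> 0" using nz by auto
    then obtain v where "beval \<sigma> s h xs = Suc v" using not0_implies_Suc by blast
    then show "beval (\<sigma> @ \<rho>) t h xs = beval \<sigma> s h xs" using Comp.IH(2)[OF h] Comp.prems(2) by simp
  qed
  have "beval (\<sigma> @ \<rho>) t (Comp g hs) xs = (if 0 \<in> set ?V then 0 else beval (\<sigma> @ \<rho>) t g (map (\<lambda>y. y - 1) ?V))"
    by (simp only: beval.simps Let_def E)
  then show ?case using nz Comp.IH(1)[OF gv Comp.prems(2)] by simp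
next
  case (PrimRec g h)
  show ?case
  proof (cases xs)
    case Nil then show ?thesis using PrimRec.prems by simp
  next
    case (Cons n ys)
    have "\<And>y. rec_nat (beval \<sigma> s g ys) (\<lambda>m r. if r = 0 then 0 else beval \<sigma> s h (m # (r - 1) # ys)) n = Suc y \<Longrightarrow>
      rec_nat (beval (\<sigma> @ \<rho>) t g ys) (\<lambda>m r. if r = 0 then 0 else beval (\<sigma> @ \<rho>) t h (m # (r - 1) # ys)) n = Suc y"
    proof (induction n)
      case 0 then show ?case using PrimRec.IH(1) PrimRec.prems(2) by simp
    next
      case (Suc n)
      let ?r = "rec_nat (beval \<sigma> s g ys) (\<lambda>m r. if r = 0 then 0 else beval \<sigma> s h (m # (r - 1) # ys)) n"
      have "?r \<noteq> 0" using Suc.prems by (auto split: if_splits)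
      then obtain r' where r': "?r = Suc r'" using not0_implies_Suc by blast
      then have hv: "beval \<sigma> s h (n # r' # ys) = Suc y" using Suc.prems by simp
      show ?case using Suc.IH[OF r'] PrimRec.IH(2)[OF hv PrimRec.prems(2)] by simp
    qed
    then show ?thesis using PrimRec.prems(1) Cons by simp
  qed
next
  case (Mu g)
  let ?L = "LEAST n. n = s \<or> beval \<sigma> s g (n # xs) \<le> 1"
  have c: "?L < s \<and> beval \<sigma> s g (?L # xs) = 1" and yL: "y = ?L"
    using Mu.prems(1) by (simp_all add: Let_def split: if_splits)
  have lt: "beval \<sigma> s g (m # xs) = Suc (Suc (beval \<sigma> s g (m # xs) - 2))" if "m < ?L" for m
  proof -
    have "\<not> (m = s \<or> beval \<sigma> s g (m # xs) \<le> 1)" using not_less_Least[OF that] .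
    then show ?thesis by linarith
  qed
  have lt': "beval (\<sigma> @ \<rho>) t g (m # xs) = Suc (Suc (beval \<sigma> s g (m # xs) - 2))" if "m < ?L" for m
    using Mu.IH[OF lt[OF that] Mu.prems(2)] .
  have L1: "beval (\<sigma> @ \<rho>) t g (?L # xs) = 1" using Mu.IH[of "?L # xs" 0] c Mu.prems(2) by simp
  have eq: "(LEAST n. n = t \<or> beval (\<sigma> @ \<rho>) t g (n # xs) \<le> 1) = ?L"
  proof (rule Least_equality)
    show "?L = t \<or> beval (\<sigma> @ \<rho>) t g (?L # xs) \<le> 1" using L1 by simp
  next
    fix n assume n: "n = t \<or> beval (\<sigma> @ \<rho>) t g (n # xs) \<le> 1"
    show "?L \<le> n"
    proof (rule ccontr)
      assume "\<not> ?L \<le> n"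
      then have "n < ?L" by simp
      then show False using n lt'[of n] c Mu.prems(2) by auto
    qed
  qed
  show ?case using eq L1 c yL Mu.prems(2) by (simp add: Let_def)
qed

lemma beval_sound: "beval \<sigma> s p xs = Suc y \<Longrightarrow> (\<forall>i<length \<sigma>. \<sigma> ! i = f i) \<Longrightarrow> eval f p xs y"
proof (induction p arbitrary: xs y)
  case Zero then show ?case by (simp add: ev_zero)
next
  case Succ then show ?case by (auto split: list.splits intro: ev_succ)
next
  case (Proj i) then show ?case by (auto split: if_splits intro: ev_proj)
next
  case Orc then show ?case by (auto split: list.splits if_splits intro: ev_orc[of f, simplified])
next
  case (Comp g hs)
  let ?V = "map (\<lambda>h. beval \<sigma> s h xs) hs"
  let ?W = "map (\<lambda>y. y - 1) ?V"
  have nz: "0 \<notin> set ?V" and gv: "beval \<sigma> s g ?W = Suc y"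
    using Comp.prems(1) by (simp_all add: Let_def split: if_splits)
  show ?case
  proof (rule ev_comp[where ys="?W"])
    show "length ?W = length hs" by simp
    show "\<forall>i<length hs. eval f (hs ! i) xs (?W ! i)"
    proof (intro allI impI)
      fix i assume i: "i < length hs"
      then have hi: "hs ! i \<in> set hs" by simp
      have "beval \<sigma> s (hs ! i) xs \<noteq> 0" using nz i by (metis length_map nth_map nth_mem)
      then have "beval \<sigma> s (hs ! i) xs = Suc (?W ! i)" using i by simp
      then show "eval f (hs ! i) xs (?W ! i)" using Comp.IH(2)[OF hi] Comp.prems(2) by blast
    qed
    show "eval f g ?W y" using Comp.IH(1)[OF gv Comp.prems(2)] .
  qed
next
  case (PrimRec g h)
  show ?case
  proof (cases xs)
    case Nil then show ?thesis using PrimRec.prems by simp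
  next
    case (Cons n ys)
    have "\<And>y. rec_nat (beval \<sigma> s g ys) (\<lambda>m r. if r = 0 then 0 else beval \<sigma> s h (m # (r - 1) # ys)) n = Suc y \<Longrightarrow>
      eval f (PrimRec g h) (n # ys) y"
    proof (induction n)
      case 0 then show ?case using PrimRec.IH(1) PrimRec.prems(2) by (simp add: ev_prec0)
    next
      case (Suc n)
      let ?r = "rec_nat (beval \<sigma> s g ys) (\<lambda>m r. if r = 0 then 0 else beval \<sigma> s h (m # (r - 1) # ys)) n"
      have "?r \<noteq> 0" using Suc.prems by (auto split: if_splits)
      then obtain r' where r': "?r = Suc r'" using not0_implies_Suc by blast
      then have hv: "beval \<sigma> s h (n # r' # ys) = Suc y" using Suc.prems by simp
      show ?case using Suc.IH[OF r'] PrimRec.IH(2)[OF hv PrimRec.prems(2)] by (rule ev_precS)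
    qed
    then show ?thesis using PrimRec.prems(1) Cons by simp
  qed
next
  case (Mu g)
  let ?L = "LEAST n. n = s \<or> beval \<sigma> s g (n # xs) \<le> 1"
  have c: "?L < s \<and> beval \<sigma> s g (?L # xs) = 1" and yL: "y = ?L"
    using Mu.prems(1) by (simp_all add: Let_def split: if_splits)
  have a: "eval f g (?L # xs) 0" using Mu.IH[of "?L # xs" 0] c Mu.prems(2) by simp
  have b: "\<forall>m<?L. \<exists>y. eval f g (m # xs) (Suc y)"
  proof (intro allI impI)
    fix m assume m: "m < ?L"
    have "\<not> (m = s \<or> beval \<sigma> s g (m # xs) \<le> 1)" using not_less_Least[OF m] .
    then have "beval \<sigma> s g (m # xs) = Suc (Suc (beval \<sigma> s g (m # xs) - 2))" by linarith
    then show "\<exists>y. eval f g (m # xs) (Suc y)" using Mu.IH Mu.prems(2) by blast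
  qed
  show ?case unfolding yL by (rule ev_mu[OF a b])
qed

definition ftake :: "(nat \<Rightarrow> nat) \<Rightarrow> nat \<Rightarrow> nat list" where
  "ftake f s = map f [0..<s]"

lemma ftake_length[simp]: "length (ftake f s) = s" by (simp add: ftake_def)

lemma ftake_nth[simp]: "i < s \<Longrightarrow> ftake f s ! i = f i" by (simp add: ftake_def)

lemma ftake_append: "s \<le> t \<Longrightarrow> ftake f t = ftake f s @ map f [s..<t]"
  unfolding ftake_def by (metis map_append le_Suc_ex upt_add_eq_append zero_le)

lemma beval_up: "beval (ftake f s) s p xs = Suc y \<Longrightarrow> s \<le> t \<Longrightarrow> beval (ftake f t) t p xs = Suc y"
  using beval_mono[of "ftake f s" s p xs y t "map f [s..<t]"] ftake_append[of s t f] by simp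

lemma beval_complete: "eval f p xs y \<Longrightarrow> \<exists>s. beval (ftake f s) s p xs = Suc y"
proof (induction rule: eval.induct)
  case (ev_zero xs) then show ?case by simp
next
  case (ev_succ x xs) then show ?case by simp
next
  case (ev_proj i xs) then show ?case by simp
next
  case (ev_orc x xs)
  have "beval (ftake f (Suc x)) (Suc x) Orc (x # xs) = Suc (f x)" by simp
  then show ?case by blast
next
  case (ev_comp ys hs xs g z)
  have "\<forall>i. \<exists>s. i < length hs \<longrightarrow> beval (ftake f s) s (hs ! i) xs = Suc (ys ! i)"
    using ev_comp.IH(1) by blast
  then obtain S where S: "\<And>i. i < length hs \<Longrightarrow> beval (ftake f (S i)) (S i) (hs ! i) xs = Suc (ys ! i)"
    by metis
  obtain sg where sg: "beval (ftake f sg) sg g ys = Suc z" using ev_comp.IH(2) by blast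
  define N where "N = sg + (\<Sum>i<length hs. S i)"
  have hN: "beval (ftake f N) N (hs ! i) xs = Suc (ys ! i)" if i: "i < length hs" for i
  proof (rule beval_up[OF S[OF i]])
    have "S i \<le> (\<Sum>i<length hs. S i)" using i by (intro member_le_sum) auto
    then show "S i \<le> N" unfolding N_def by simp
  qed
  have V: "map (\<lambda>h. beval (ftake f N) N h xs) hs = map Suc ys"
    by (rule nth_equalityI) (use hN ev_comp.hyps(1) in auto)
  have gN: "beval (ftake f N) N g ys = Suc z" using beval_up[OF sg] unfolding N_def by simp
  have "beval (ftake f N) N (Comp g hs) xs = Suc z"
    by (simp only: beval.simps Let_def V) (simp add: gN comp_def)
  then show ?case by blast
next
  case (ev_prec0 g xs y h)
  then obtain s where "beval (ftake f s) s g xs = Suc y" by blast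
  then have "beval (ftake f s) s (PrimRec g h) (0 # xs) = Suc y" by simp
  then show ?case by blast
next
  case (ev_precS g h n xs y z)
  obtain s1 where s1: "beval (ftake f s1) s1 (PrimRec g h) (n # xs) = Suc y" using ev_precS.IH(1) by blast
  obtain s2 where s2: "beval (ftake f s2) s2 h (n # y # xs) = Suc z" using ev_precS.IH(2) by blast
  have a: "beval (ftake f (s1 + s2)) (s1 + s2) (PrimRec g h) (n # xs) = Suc y" by (rule beval_up[OF s1]) simp
  have b: "beval (ftake f (s1 + s2)) (s1 + s2) h (n # y # xs) = Suc z" by (rule beval_up[OF s2]) simp
  have "beval (ftake f (s1 + s2)) (s1 + s2) (PrimRec g h) (Suc n # xs) = Suc z" using a b by simp
  then show ?case by blast
next
  case (ev_mu g n xs)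
  obtain s0 where s0: "beval (ftake f s0) s0 g (n # xs) = Suc 0" using ev_mu.IH(1) by blast
  have "\<forall>m. \<exists>s y. m < n \<longrightarrow> beval (ftake f s) s g (m # xs) = Suc (Suc y)"
    using ev_mu.IH(2) by blast
  then obtain S Y where S: "\<And>m. m < n \<Longrightarrow> beval (ftake f (S m)) (S m) g (m # xs) = Suc (Suc (Y m))"
    by metis
  define N where "N = s0 + Suc n + (\<Sum>i<n. S i)"
  have mN: "beval (ftake f N) N g (m # xs) = Suc (Suc (Y m))" if m: "m < n" for m
  proof (rule beval_up[OF S[OF m]])
    have "S m \<le> (\<Sum>i<n. S i)" using m by (intro member_le_sum) auto
    then show "S m \<le> N" unfolding N_def by simp
  qed
  have nN: "beval (ftake f N) N g (n # xs) = 1" using beval_up[OF s0] unfolding N_def by simp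
  have eq: "(LEAST k. k = N \<or> beval (ftake f N) N g (k # xs) \<le> 1) = n"
  proof (rule Least_equality)
    show "n = N \<or> beval (ftake f N) N g (n # xs) \<le> 1" using nN by simp
  next
    fix k assume k: "k = N \<or> beval (ftake f N) N g (k # xs) \<le> 1"
    show "n \<le> k"
    proof (rule ccontr)
      assume "\<not> n \<le> k"
      then have "k < n" by simp
      then show False using k mN[of k] unfolding N_def by auto
    qed
  qed
  have "n < N" unfolding N_def by simp
  then have "beval (ftake f N) N (Mu g) xs = Suc n" using eq nN by (simp add: Let_def)
  then show ?case by blast
qed

definition bvl :: "rf \<Rightarrow> nat \<Rightarrow> nat list \<Rightarrow> nat" where
  "bvl p k l = beval (list_decode (l ! k)) (l ! Suc k) p (take k l)"

lemma rc_prod: "(\<And>i. i < (m::nat) \<Longrightarrow> rc f K (H i)) \<Longrightarrow> rc f K (\<lambda>l. \<Prod>i<m. H i l)"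
proof (induction m)
  case 0 then show ?case by (simp add: rc_const)
next
  case (Suc m) then show ?case by (simp add: rc_mul)
qed

lemma rc_if_const: "(c \<Longrightarrow> rc f k A) \<Longrightarrow> (\<not> c \<Longrightarrow> rc f k B) \<Longrightarrow> rc f k (\<lambda>xs. if c then A xs else B xs)"
  by (cases c) simp_all

lemma rc_cons:
  assumes A: "rc f k A" and B: "rc f (Suc k) B"
  shows "rc f k (\<lambda>l. B (A l # l))"
proof -
  have "rc f k (\<lambda>l. B (map (\<lambda>i. (\<lambda>i. if i = 0 then A else (\<lambda>l. l ! (i - 1))) i l) [0..<Suc k]))"
    by (rule rc_comp[OF B]) (auto intro: A rc_proj)
  then show ?thesis
  proof (rule rc_ext)
    fix l :: "nat list" assume "length l = k"
    then have "map (\<lambda>i. (\<lambda>i. if i = 0 then A else (\<lambda>l. l ! (i - 1))) i l) [0..<Suc k] = A l # l"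
      by (intro nth_equalityI) (auto simp: nth_Cons' simp del: upt_Suc)
    then show "B (map (\<lambda>i. (\<lambda>i. if i = 0 then A else (\<lambda>l. l ! (i - 1))) i l) [0..<Suc k]) = B (A l # l)"
      by simp
  qed
qed

lemma rc_bvl: "rc f (Suc (Suc k)) (bvl p k)"
proof (induction p arbitrary: k)
  case Zero
  show ?case by (rule rc_ext[OF rc_const[of f _ 1]]) (simp add: bvl_def)
next
  case Succ
  show ?case
  proof (cases k)
    case 0 then show ?thesis by (intro rc_ext[OF rc_const[of f _ 0]]) (simp add: bvl_def)
  next
    case (Suc k')
    have "rc f (Suc (Suc k)) (\<lambda>l. Suc (Suc (l ! 0)))" by (intro rc_Suc rc_proj) simp
    then show ?thesis
    proof (rule rc_ext)
      fix l :: "nat list" assume l: "length l = Suc (Suc k)"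
      then obtain x r where "l = x # r" by (cases l) auto
      then show "Suc (Suc (l ! 0)) = bvl Succ k l" using Suc by (simp add: bvl_def)
    qed
  qed
next
  case (Proj i)
  have "rc f (Suc (Suc k)) (\<lambda>l. if i < k then Suc (l ! i) else 0)"
    by (cases "i < k") (auto intro!: rc_Suc rc_proj rc_const)
  then show ?case by (rule rc_ext) (simp add: bvl_def min_def)
next
  case Orc
  show ?case
  proof (cases k)
    case 0 then show ?thesis by (intro rc_ext[OF rc_const[of f _ 0]]) (simp add: bvl_def)
  next
    case (Suc k')
    have "rc f (Suc (Suc k)) (\<lambda>l. if l ! 0 < length (list_decode (l ! k)) then Suc (nthc (l ! k) (l ! 0)) else 0)"
      by (intro rc_if rcp_less rc_proj rc_len rc_Suc rc_nthc rc_const) simp_all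
    then show ?thesis
    proof (rule rc_ext)
      fix l :: "nat list" assume l: "length l = Suc (Suc k)"
      then obtain x r where "l = x # r" by (cases l) auto
      then show "(if l ! 0 < length (list_decode (l ! k)) then Suc (nthc (l ! k) (l ! 0)) else 0) = bvl Orc k l"
        using l Suc by (auto simp: bvl_def nthc_correct)
    qed
  qed
next
  case (Comp g hs)
  let ?m = "length hs"
  let ?H = "\<lambda>i. bvl (hs ! i) k"
  have H: "rc f (Suc (Suc k)) (?H i)" if "i < ?m" for i
    using Comp.IH(2)[of "hs ! i" k] that by simp
  have P: "rc f (Suc (Suc k)) (\<lambda>l. \<Prod>i<?m. ?H i l)" by (rule rc_prod) (rule H)
  let ?K = "\<lambda>i l. if i < ?m then ?H i l - 1 else if i = ?m then l ! k else l ! Suc k"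
  have G: "rc f (Suc (Suc k)) (\<lambda>l. bvl g ?m (map (\<lambda>i. ?K i l) [0..<Suc (Suc ?m)]))"
    by (rule rc_comp[OF Comp.IH(1)]) (auto intro!: rc_if_const rc_pred H rc_proj)
  have "rc f (Suc (Suc k)) (\<lambda>l. if (\<Prod>i<?m. ?H i l) = 0 then 0 else bvl g ?m (map (\<lambda>i. ?K i l) [0..<Suc (Suc ?m)]))"
    by (rule rc_ifz[OF P rc_const G])
  then show ?case
  proof (rule rc_ext)
    fix l :: "nat list" assume l: "length l = Suc (Suc k)"
    let ?\<sigma> = "list_decode (l ! k)" and ?s = "l ! Suc k" and ?xs = "take k l"
    have V: "map (\<lambda>h. beval ?\<sigma> ?s h ?xs) hs = map (\<lambda>i. ?H i l) [0..<?m]"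
      by (rule nth_equalityI) (simp_all add: bvl_def)
    have Z: "((\<Prod>i<?m. ?H i l) = 0) = (0 \<in> set (map (\<lambda>i. ?H i l) [0..<?m]))"
      by (auto simp: prod_zero_iff)
    have M: "map (\<lambda>i. ?K i l) [0..<Suc (Suc ?m)] = map (\<lambda>i. ?H i l - 1) [0..<?m] @ [l ! k, l ! Suc k]"
      by (rule nth_equalityI) (auto simp: nth_append)
    have B: "bvl g ?m (map (\<lambda>i. ?K i l) [0..<Suc (Suc ?m)]) = beval ?\<sigma> ?s g (map (\<lambda>i. ?H i l - 1) [0..<?m])"
    proof -
      have T: "take ?m (map (\<lambda>i. ?K i l) [0..<Suc (Suc ?m)]) = map (\<lambda>i. ?H i l - 1) [0..<?m]"
        by (rule nth_equalityI) simp_all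
      have "map (\<lambda>i. ?K i l) [0..<Suc (Suc ?m)] ! ?m = l ! k"
           "map (\<lambda>i. ?K i l) [0..<Suc (Suc ?m)] ! Suc ?m = l ! Suc k"
        by (simp_all del: upt_Suc)
      then show ?thesis by (simp only: bvl_def[of g] T)
    qed
    show "(if (\<Prod>i<?m. ?H i l) = 0 then 0 else bvl g ?m (map (\<lambda>i. ?K i l) [0..<Suc (Suc ?m)])) = bvl (Comp g hs) k l"
      unfolding B Z by (simp only: bvl_def beval.simps Let_def V map_map comp_def)
  qed
next
  case (PrimRec g h)
  show ?case
  proof (cases k)
    case 0 then show ?thesis by (intro rc_ext[OF rc_const[of f _ 0]]) (simp add: bvl_def)
  next
    case (Suc k')
    define G where "G = bvl g k'"
    define H where "H = (\<lambda>l. if l ! 1 = 0 then 0 else bvl h (Suc (Suc k')) (l ! 0 # (l ! 1 - 1) # drop 2 l))"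
    define F where "F = (\<lambda>l. rec_nat (G (tl l)) (\<lambda>m r. H (m # r # tl l)) (hd l))"
    have rG: "rc f (Suc (Suc k')) G" unfolding G_def by (rule PrimRec.IH(1))
    let ?K = "\<lambda>i l. if i = 0 then l ! 0 else if i = 1 then l ! 1 - 1 else (l ! i :: nat)"
    have hb: "rc f (Suc (Suc (Suc (Suc k')))) (\<lambda>l. bvl h (Suc (Suc k')) (map (\<lambda>i. ?K i l) [0..<Suc (Suc (Suc (Suc k')))]))"
      by (rule rc_comp[OF PrimRec.IH(2)]) (auto intro!: rc_if_const rc_pred rc_proj)
    have "rc f (Suc (Suc (Suc (Suc k')))) H"
      unfolding H_def
    proof (rule rc_ifz[OF rc_proj rc_const hb, THEN rc_ext])
      fix l :: "nat list" assume l: "length l = Suc (Suc (Suc (Suc k')))"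
      have "map (\<lambda>i. ?K i l) [0..<Suc (Suc (Suc (Suc k')))] = l ! 0 # (l ! 1 - 1) # drop 2 l"
      proof -
        have ar: "\<And>i. \<not> i \<le> Suc 0 \<Longrightarrow> Suc (Suc (i - Suc (Suc 0))) = i" by arith
        show ?thesis using l by (intro nth_equalityI) (auto simp: nth_Cons' ar simp del: upt_Suc)
      qed
      then show "(if l ! 1 = 0 then 0 else bvl h (Suc (Suc k')) (map (\<lambda>i. ?K i l) [0..<Suc (Suc (Suc (Suc k')))]))
        = (if l ! 1 = 0 then 0 else bvl h (Suc (Suc k')) (l ! 0 # (l ! 1 - 1) # drop 2 l))" by simp
    qed simp
    then have rF: "rc f (Suc (Suc (Suc k'))) F"
      by (intro rc_prec'[OF refl refl rG]) (simp_all add: F_def)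
    show ?thesis unfolding Suc
    proof (rule rc_ext[OF rF])
      fix l :: "nat list" assume l: "length l = Suc (Suc (Suc k'))"
      then obtain n r where lr: "l = n # r" by (cases l) auto
      have st: "(\<lambda>m r'. H (m # r' # r)) = (\<lambda>m r'. if r' = 0 then 0 else
          beval (list_decode (r ! k')) (r ! Suc k') h (m # (r' - 1) # take k' r))"
        by (intro ext) (simp add: H_def bvl_def)
      show "F l = bvl (PrimRec g h) (Suc k') l"
        unfolding F_def lr using st by (simp add: bvl_def G_def)
    qed
  qed
next
  case (Mu g)
  define B where "B = bvl g (Suc k)"
  have rB: "rc f (Suc (Suc (Suc k))) B" unfolding B_def by (rule Mu.IH)
  have rQ: "rcp f (Suc (Suc (Suc k))) (\<lambda>l. l ! 0 = l ! Suc (Suc k) \<or> B l \<le> 1)"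
    by (intro rcp_disj rcp_eq rcp_le rc_proj rB rc_const) simp_all
  have rL: "rc f (Suc (Suc k)) (\<lambda>l. LEAST n. (\<lambda>l. l ! 0 = l ! Suc (Suc k) \<or> B l \<le> 1) (n # l))"
  proof (rule rc_least[OF rQ])
    fix l :: "nat list"
    show "\<exists>n. (\<lambda>l. l ! 0 = l ! Suc (Suc k) \<or> B l \<le> 1) (n # l)" by (intro exI[of _ "l ! Suc k"]) simp
  qed
  define L where "L = (\<lambda>l. LEAST n. (\<lambda>l. l ! 0 = l ! Suc (Suc k) \<or> B l \<le> 1) (n # l))"
  have rL': "rc f (Suc (Suc k)) L" using rL unfolding L_def .
  have c1: "rcp f (Suc (Suc k)) (\<lambda>l. L l < l ! Suc k)" by (rule rcp_less[OF rL' rc_proj]) simp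
  have c2: "rc f (Suc (Suc k)) (\<lambda>l. B (L l # l))" by (rule rc_cons[OF rL' rB])
  have c3: "rcp f (Suc (Suc k)) (\<lambda>l. B (L l # l) = 1)" by (rule rcp_eq[OF c2 rc_const])
  have "rc f (Suc (Suc k)) (\<lambda>l. if L l < l ! Suc k \<and> B (L l # l) = 1 then Suc (L l) else 0)"
    by (rule rc_if[OF rcp_conj[OF c1 c3] rc_Suc[OF rL'] rc_const])
  then show ?case
  proof (rule rc_ext)
    fix l :: "nat list" assume l: "length l = Suc (Suc k)"
    have Bn: "B (n # l) = beval (list_decode (l ! k)) (l ! Suc k) g (n # take k l)" for n
      by (simp add: B_def bvl_def)
    show "(if L l < l ! Suc k \<and> B (L l # l) = 1 then Suc (L l) else 0) = bvl (Mu g) k l"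
      by (simp add: L_def Bn bvl_def Let_def)
  qed
qed

fun kbf :: "nat list \<Rightarrow> nat list \<Rightarrow> bool" where
  "kbf [] t = False"
| "kbf (a # s) [] = True"
| "kbf (a # s) (b # t) = (a < b \<or> (a = b \<and> kbf s t))"

lemma kbf_irrefl: "\<not> kbf s s"
  by (induction s) auto

lemma kbf_trans: "kbf a b \<Longrightarrow> kbf b c \<Longrightarrow> kbf a c"
proof (induction a arbitrary: b c)
  case Nil then show ?case by simp
next
  case (Cons x a)
  then show ?case by (cases b; cases c) auto
qed

lemma kbf_total: "s \<noteq> t \<Longrightarrow> kbf s t \<or> kbf t s"
proof (induction s arbitrary: t)
  case Nil then show ?case by (cases t) auto
next
  case (Cons x s) then show ?case by (cases t) auto
qed

lemma kbf_append: "kbf (r @ a) (r @ b) = kbf a b"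
  by (induction r) auto

lemma kbf_ext: "kbf (r @ [c]) r"
  using kbf_append[of r "[c]" "[]"] by simp

definition kbn :: "nat list \<Rightarrow> nat list \<Rightarrow> bool" where
  "kbn s t \<longleftrightarrow> (length t < length s \<and> (\<forall>i<length t. s ! i = t ! i)) \<or>
     (\<exists>j<length s. j < length t \<and> (\<forall>i<j. s ! i = t ! i) \<and> s ! j < t ! j)"

lemma kbn_Cons: "kbn (a # s) (b # t) = (a < b \<or> (a = b \<and> kbn s t))"
proof
  assume "kbn (a # s) (b # t)"
  then consider (e) "length t < length s" "\<forall>i<Suc (length t). (a # s) ! i = (b # t) ! i"
    | (l) j where "j < Suc (length s)" "j < Suc (length t)" "\<forall>i<j. (a # s) ! i = (b # t) ! i" "(a # s) ! j < (b # t) ! j"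
    unfolding kbn_def by auto
  then show "a < b \<or> (a = b \<and> kbn s t)"
  proof cases
    case e
    have "a = b" using e(2) by (metis nth_Cons_0 zero_less_Suc)
    moreover have "\<forall>i<length t. s ! i = t ! i" using e(2) by (metis Suc_mono nth_Cons_Suc)
    ultimately show ?thesis using e(1) unfolding kbn_def by blast
  next
    case l
    show ?thesis
    proof (cases j)
      case 0 then show ?thesis using l by simp
    next
      case (Suc j')
      have "a = b" using l(3) Suc by (metis nth_Cons_0 zero_less_Suc)
      moreover have "\<forall>i<j'. s ! i = t ! i" using l(3) Suc by (metis Suc_mono nth_Cons_Suc)
      moreover have "j' < length s" "j' < length t" "s ! j' < t ! j'" using l Suc by auto
      ultimately show ?thesis unfolding kbn_def by blast
    qed
  qed
next
  assume "a < b \<or> (a = b \<and> kbn s t)"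
  then consider "a < b" | "a = b" "kbn s t" by blast
  then show "kbn (a # s) (b # t)"
  proof cases
    case 1
    then show ?thesis unfolding kbn_def by (intro disjI2 exI[of _ 0]) simp
  next
    case 2
    from 2(2) consider (e) "length t < length s" "\<forall>i<length t. s ! i = t ! i"
      | (l) j where "j < length s" "j < length t" "\<forall>i<j. s ! i = t ! i" "s ! j < t ! j"
      unfolding kbn_def by auto
    then show ?thesis
    proof cases
      case e
      have "\<forall>i<length (b # t). (a # s) ! i = (b # t) ! i"
        using e(2) 2(1) by (auto simp: nth_Cons')
      then show ?thesis using e(1) unfolding kbn_def by simp
    next
      case l
      have "\<forall>i<Suc j. (a # s) ! i = (b # t) ! i"
        using l(3) 2(1) by (auto simp: nth_Cons')
      then show ?thesis unfolding kbn_def using l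
        by (intro disjI2 exI[of _ "Suc j"]) simp
    qed
  qed
qed

lemma kbn_kbf: "kbn s t = kbf s t"
proof (induction s t rule: kbf.induct)
  case (1 t) then show ?case by (simp add: kbn_def)
next
  case (2 a s) then show ?case by (simp add: kbn_def)
next
  case (3 a s b t) then show ?case by (simp add: kbn_Cons)
qed

lemma rcp_kb:
  assumes A: "rc f k A" and B: "rc f k B"
  shows "rcp f k (\<lambda>xs. kbf (list_decode (A xs)) (list_decode (B xs)))"
proof -
  have A1: "rc f (Suc k) (\<lambda>l. A (tl l))" by (rule rc_shift[OF A])
  have B1: "rc f (Suc k) (\<lambda>l. B (tl l))" by (rule rc_shift[OF B])
  have A2: "rc f (Suc (Suc k)) (\<lambda>l. A (tl (tl l)))" using rc_shift[OF A1] by simp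
  have B2: "rc f (Suc (Suc k)) (\<lambda>l. B (tl (tl l)))" using rc_shift[OF B1] by simp
  have E1: "rcp f (Suc k) (\<lambda>l. nthc (A (tl l)) (l ! 0) = nthc (B (tl l)) (l ! 0))"
    by (rule rcp_eq; rule rc_nthc; (rule A1 | rule B1 | (rule rc_proj, simp)))
  have E2: "rcp f (Suc (Suc k)) (\<lambda>l. nthc (A (tl (tl l))) (l ! 0) = nthc (B (tl (tl l))) (l ! 0))"
    by (rule rcp_eq; rule rc_nthc; (rule A2 | rule B2 | (rule rc_proj, simp)))
  have P1: "rcp f k (\<lambda>xs. length (list_decode (B xs)) < length (list_decode (A xs)) \<and>
       (\<forall>i<length (list_decode (B xs)). (\<lambda>l. nthc (A (tl l)) (l ! 0) = nthc (B (tl l)) (l ! 0)) (i # xs)))"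
    by (rule rcp_conj[OF rcp_less[OF rc_len[OF B] rc_len[OF A]] rcp_ball[OF rc_len[OF B] E1]])
  have Q1: "rcp f (Suc k) (\<lambda>l. l ! 0 < length (list_decode (A (tl l))) \<and> l ! 0 < length (list_decode (B (tl l))))"
    by (rule rcp_conj; rule rcp_less; (rule rc_proj, simp)?; rule rc_len; (rule A1 | rule B1))
  have Q2: "rcp f (Suc k) (\<lambda>l. \<forall>i<l ! 0. (\<lambda>l. nthc (A (tl (tl l))) (l ! 0) = nthc (B (tl (tl l))) (l ! 0)) (i # l))"
    by (rule rcp_ball[OF rc_proj E2]) simp
  have Q3: "rcp f (Suc k) (\<lambda>l. nthc (A (tl l)) (l ! 0) < nthc (B (tl l)) (l ! 0))"
    by (rule rcp_less; rule rc_nthc; (rule A1 | rule B1 | (rule rc_proj, simp)))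
  have P2: "rcp f k (\<lambda>xs. \<exists>j<length (list_decode (A xs)).
      (\<lambda>l. (l ! 0 < length (list_decode (A (tl l))) \<and> l ! 0 < length (list_decode (B (tl l)))) \<and>
          (\<forall>i<l ! 0. (\<lambda>l. nthc (A (tl (tl l))) (l ! 0) = nthc (B (tl (tl l))) (l ! 0)) (i # l)) \<and>
          nthc (A (tl l)) (l ! 0) < nthc (B (tl l)) (l ! 0)) (j # xs))"
    by (rule rcp_bex[OF rc_len[OF A] rcp_conj[OF Q1 rcp_conj[OF Q2 Q3]]])
  show ?thesis
  proof (rule rcp_ext[OF rcp_disj[OF P1 P2]])
    fix xs :: "nat list"
    let ?s = "list_decode (A xs)" and ?t = "list_decode (B xs)"
    have e1: "(length ?t < length ?s \<and> (\<forall>i<length ?t. nthc (A xs) i = nthc (B xs) i)) =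
              (length ?t < length ?s \<and> (\<forall>i<length ?t. ?s ! i = ?t ! i))"
      by (auto simp: nthc_correct)
    have e2: "(\<exists>j<length ?s. (j < length ?s \<and> j < length ?t) \<and> (\<forall>i<j. nthc (A xs) i = nthc (B xs) i) \<and>
                 nthc (A xs) j < nthc (B xs) j) =
              (\<exists>j<length ?s. j < length ?t \<and> (\<forall>i<j. ?s ! i = ?t ! i) \<and> ?s ! j < ?t ! j)"
      by (auto simp: nthc_correct)
    show "((length ?t < length ?s \<and> (\<forall>i<length ?t. (\<lambda>l. nthc (A (tl l)) (l ! 0) = nthc (B (tl l)) (l ! 0)) (i # xs))) \<or>
        (\<exists>j<length ?s. (\<lambda>l. (l ! 0 < length (list_decode (A (tl l))) \<and> l ! 0 < length (list_decode (B (tl l)))) \<and>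
          (\<forall>i<l ! 0. (\<lambda>l. nthc (A (tl (tl l))) (l ! 0) = nthc (B (tl (tl l))) (l ! 0)) (i # l)) \<and>
          nthc (A (tl l)) (l ! 0) < nthc (B (tl l)) (l ! 0)) (j # xs))) = kbf ?s ?t"
      unfolding kbn_kbf[symmetric] kbn_def using e1 e2 by simp
  qed
qed

lemma desc_step:
  assumes desc: "\<And>i. kbf (\<sigma> (Suc i)) (\<sigma> i)"
    and pre: "\<And>i. N \<le> i \<Longrightarrow> \<exists>r. \<sigma> i = \<rho> @ r"
  shows "\<exists>c M. \<forall>i\<ge>M. \<exists>r. \<sigma> i = (\<rho> @ [c]) @ r"
proof -
  define r where "r i = drop (length \<rho>) (\<sigma> i)" for i
  have sr: "\<sigma> i = \<rho> @ r i" if "N \<le> i" for i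
    using pre[OF that] unfolding r_def by auto
  have kr: "kbf (r (Suc i)) (r i)" if "N \<le> i" for i
    using desc[of i] sr[OF that] sr[of "Suc i"] that kbf_append by simp
  have ne: "r i \<noteq> []" if le: "Suc N \<le> i" for i
  proof -
    obtain i' where i': "i = Suc i'" using le by (cases i) auto
    then have "N \<le> i'" using le by simp
    then show ?thesis using kr[of i'] i' by auto
  qed
  define h where "h i = hd (r i)" for i
  have hmono: "h (Suc i) \<le> h i" if le: "Suc N \<le> i" for i
  proof -
    obtain a u where a: "r (Suc i) = a # u" using ne[of "Suc i"] le by (cases "r (Suc i)") auto
    obtain b v where b: "r i = b # v" using ne[of i] le by (cases "r i") auto
    have "kbf (a # u) (b # v)" using kr[of i] a b le by simp
    then have "a \<le> b" by auto
    then show ?thesis using a b by (simp add: h_def)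
  qed
  define c where "c = (LEAST v. \<exists>i\<ge>Suc N. h i = v)"
  have "\<exists>i\<ge>Suc N. h i = c" unfolding c_def by (rule LeastI_ex) blast
  then obtain M where M: "Suc N \<le> M" "h M = c" by blast
  have hle: "h i \<le> h M" if "M \<le> i" for i
    using that
  proof (induction rule: dec_induct)
    case base then show ?case by simp
  next
    case (step j) then show ?case using hmono[of j] M(1) by simp
  qed
  have hge: "c \<le> h i" if "Suc N \<le> i" for i
    unfolding c_def by (rule Least_le) (use that in blast)
  have "\<forall>i\<ge>M. \<exists>r. \<sigma> i = (\<rho> @ [c]) @ r"
  proof (intro allI impI)
    fix i assume i: "M \<le> i"
    then have "h i = c" using hle[OF i] hge[of i] M by simp
    moreover have "r i \<noteq> []" using ne[of i] i M by simp
    ultimately have "r i = c # tl (r i)" unfolding h_def by (cases "r i") auto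
    then show "\<exists>r'. \<sigma> i = (\<rho> @ [c]) @ r'" using sr[of i] i M by (intro exI[of _ "tl (r i)"]) simp
  qed
  then show ?thesis by blast
qed

lemma desc_path:
  fixes \<sigma> :: "nat \<Rightarrow> nat list" and T :: "nat list \<Rightarrow> bool"
  assumes desc: "\<And>i. kbf (\<sigma> (Suc i)) (\<sigma> i)"
    and inT: "\<And>i. T (\<sigma> i)"
    and closed: "\<And>r a. T (r @ a) \<Longrightarrow> T r"
  shows "\<exists>f. \<forall>s. T (ftake f s)"
proof -
  define P where "P p q \<longleftrightarrow> (\<exists>c. fst q = fst p @ [c]) \<and> (\<forall>i\<ge>snd q. \<exists>r. \<sigma> i = fst q @ r)"
    for p q :: "nat list \<times> nat"
  define pth where "pth = rec_nat ([], 0) (\<lambda>_ p. SOME q. P p q)"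
  have inv: "\<forall>i\<ge>snd (pth k). \<exists>r. \<sigma> i = fst (pth k) @ r" for k
  proof (induction k)
    case 0 then show ?case by (simp add: pth_def)
  next
    case (Suc k)
    obtain c M where "\<forall>i\<ge>M. \<exists>r. \<sigma> i = (fst (pth k) @ [c]) @ r"
      using desc_step[where \<sigma>=\<sigma>, OF desc, of "snd (pth k)" "fst (pth k)"] Suc by blast
    then have "\<exists>q. P (pth k) q" unfolding P_def by (intro exI[of _ "(fst (pth k) @ [c], M)"]) auto
    then have "P (pth k) (pth (Suc k))" unfolding pth_def by (simp add: someI_ex)
    then show ?case unfolding P_def by blast
  qed
  have ext: "\<exists>c. fst (pth (Suc k)) = fst (pth k) @ [c]" for k
  proof -
    obtain c M where "\<forall>i\<ge>M. \<exists>r. \<sigma> i = (fst (pth k) @ [c]) @ r"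
      using desc_step[where \<sigma>=\<sigma>, OF desc, of "snd (pth k)" "fst (pth k)"] inv[of k] by blast
    then have "\<exists>q. P (pth k) q" unfolding P_def by (intro exI[of _ "(fst (pth k) @ [c], M)"]) auto
    then have "P (pth k) (pth (Suc k))" unfolding pth_def by (simp add: someI_ex)
    then show ?thesis unfolding P_def by blast
  qed
  define f where "f k = last (fst (pth (Suc k)))" for k
  have ft: "ftake f k = fst (pth k)" for k
  proof (induction k)
    case 0 then show ?case by (simp add: pth_def ftake_def)
  next
    case (Suc k)
    obtain c where c: "fst (pth (Suc k)) = fst (pth k) @ [c]" using ext by blast
    have "ftake f (Suc k) = ftake f k @ [f k]" by (simp add: ftake_def)
    moreover have "f k = c" using c by (simp add: f_def)
    ultimately show ?case using Suc c by simp
  qed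
  have "T (ftake f s)" for s
  proof -
    obtain r where "\<sigma> (snd (pth s)) = fst (pth s) @ r" using inv[of s] by blast
    then have "T (fst (pth s) @ r)" using inT by metis
    then show ?thesis using closed ft by metis
  qed
  then show ?thesis by blast
qed

definition ordT :: "(nat list \<Rightarrow> bool) \<Rightarrow> nat rel" where
  "ordT T = {(x, y). (T (list_decode x) \<and> T (list_decode y) \<and> kbf (list_decode x) (list_decode y)) \<or>
                     (T (list_decode x) \<and> \<not> T (list_decode y)) \<or>
                     (\<not> T (list_decode x) \<and> \<not> T (list_decode y) \<and> x < y)}"

lemma ld_inj: "list_decode x = list_decode y \<Longrightarrow> x = y"
  by (metis list_decode_inverse)

lemma ordT_slo: "strict_linear_order (ordT T)"
  unfolding strict_linear_order_on_def
proof (intro conjI)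
  show "trans (ordT T)"
    unfolding trans_def ordT_def using kbf_trans by auto
  show "irrefl (ordT T)"
    unfolding irrefl_def ordT_def using kbf_irrefl by auto
  show "total_on UNIV (ordT T)"
    unfolding total_on_def ordT_def
  proof (intro ballI impI)
    fix x y :: nat assume "x \<noteq> y"
    then have "list_decode x \<noteq> list_decode y" using ld_inj by blast
    then have "kbf (list_decode x) (list_decode y) \<or> kbf (list_decode y) (list_decode x)"
      by (rule kbf_total)
    then show "(x, y) \<in> {(x, y). (T (list_decode x) \<and> T (list_decode y) \<and> kbf (list_decode x) (list_decode y)) \<or>
                     (T (list_decode x) \<and> \<not> T (list_decode y)) \<or>
                     (\<not> T (list_decode x) \<and> \<not> T (list_decode y) \<and> x < y)} \<or>
          (y, x) \<in> {(x, y). (T (list_decode x) \<and> T (list_decode y) \<and> kbf (list_decode x) (list_decode y)) \<or>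
                     (T (list_decode x) \<and> \<not> T (list_decode y)) \<or>
                     (\<not> T (list_decode x) \<and> \<not> T (list_decode y) \<and> x < y)}"
      using \<open>x \<noteq> y\<close> by auto
  qed
qed

lemma ordT_wf:
  assumes closed: "\<And>r a. T (r @ a) \<Longrightarrow> T r"
  shows "\<not> wf (ordT T) \<longleftrightarrow> (\<exists>f. \<forall>s. T (ftake f s))"
proof
  assume "\<not> wf (ordT T)"
  then obtain g where g: "\<And>i. (g (Suc i), g i) \<in> ordT T"
    unfolding wf_iff_no_infinite_down_chain by blast
  have "\<exists>i0. T (list_decode (g i0))"
  proof (rule ccontr)
    assume "\<not> (\<exists>i0. T (list_decode (g i0)))"
    then have "\<forall>i. (g (Suc i), g i) \<in> {(x, y). x < y}" using g unfolding ordT_def by auto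
    then show False using wf_less unfolding wf_iff_no_infinite_down_chain by blast
  qed
  then obtain i0 where i0: "T (list_decode (g i0))" by blast
  have allT: "T (list_decode (g (i0 + j)))" for j
  proof (induction j)
    case 0 then show ?case using i0 by simp
  next
    case (Suc j) then show ?case using g[of "i0 + j"] unfolding ordT_def by auto
  qed
  define \<sigma> where "\<sigma> j = list_decode (g (i0 + j))" for j
  have "kbf (\<sigma> (Suc j)) (\<sigma> j)" for j
    using g[of "i0 + j"] allT[of j] allT[of "Suc j"] unfolding ordT_def \<sigma>_def by auto
  moreover have "T (\<sigma> j)" for j using allT unfolding \<sigma>_def by simp
  ultimately show "\<exists>f. \<forall>s. T (ftake f s)" using desc_path[of \<sigma> T] closed by blast
next
  assume "\<exists>f. \<forall>s. T (ftake f s)"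
  then obtain f where f: "\<And>s. T (ftake f s)" by blast
  have "(list_encode (ftake f (Suc i)), list_encode (ftake f i)) \<in> ordT T" for i
  proof -
    have "ftake f (Suc i) = ftake f i @ [f i]" by (simp add: ftake_def)
    then have "kbf (ftake f (Suc i)) (ftake f i)" using kbf_ext by simp
    then show ?thesis using f unfolding ordT_def by simp
  qed
  then have "\<forall>i. ((\<lambda>i. list_encode (ftake f i)) (Suc i), (\<lambda>i. list_encode (ftake f i)) i) \<in> ordT T" by simp
  then show "\<not> wf (ordT T)" unfolding wf_iff_no_infinite_down_chain
    by (intro notI) (erule notE, rule exI[of _ "\<lambda>i. list_encode (ftake f i)"], simp)
qed

definition Tr :: "rf \<Rightarrow> nat \<Rightarrow> nat list \<Rightarrow> bool" where
  "Tr e n \<sigma> \<longleftrightarrow> beval \<sigma> (length \<sigma>) e [n] = 0"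

lemma Tr_closed: "Tr e n (r @ a) \<Longrightarrow> Tr e n r"
proof (rule ccontr)
  assume a: "Tr e n (r @ a)" and "\<not> Tr e n r"
  then obtain y where "beval r (length r) e [n] = Suc y" unfolding Tr_def using not0_implies_Suc by blast
  then have "beval (r @ a) (length (r @ a)) e [n] = Suc y" by (rule beval_mono) simp
  then show False using a unfolding Tr_def by simp
qed

lemma Tr_path: "(\<exists>f. \<forall>s. Tr e n (ftake f s)) \<longleftrightarrow> \<not> (\<forall>f. \<exists>y. eval f e [n] y)"
proof
  assume "\<exists>f. \<forall>s. Tr e n (ftake f s)"
  then obtain f where f: "\<And>s. beval (ftake f s) s e [n] = 0" unfolding Tr_def by auto
  have "\<not> (\<exists>y. eval f e [n] y)"
  proof
    assume "\<exists>y. eval f e [n] y"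
    then obtain y where "eval f e [n] y" by blast
    then obtain s where "beval (ftake f s) s e [n] = Suc y" using beval_complete by blast
    then show False using f[of s] by simp
  qed
  then show "\<not> (\<forall>f. \<exists>y. eval f e [n] y)" by blast
next
  assume "\<not> (\<forall>f. \<exists>y. eval f e [n] y)"
  then obtain f where f: "\<And>y. \<not> eval f e [n] y" by blast
  have "Tr e n (ftake f s)" for s
  proof (rule ccontr)
    assume "\<not> Tr e n (ftake f s)"
    then obtain y where "beval (ftake f s) (length (ftake f s)) e [n] = Suc y"
      unfolding Tr_def using not0_implies_Suc by blast
    then have "eval f e [n] y" by (rule beval_sound) simp
    then show False using f by blast
  qed
  then show "\<exists>f. \<forall>s. Tr e n (ftake f s)" by blast
qed

lemma enc_list_inj:
  "(\<And>h q. h \<in> set hs \<Longrightarrow> enc h = enc q \<Longrightarrow> h = q) \<Longrightarrow> map enc hs = map enc hs' \<Longrightarrow> hs = hs'"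
proof (induction hs arbitrary: hs')
  case Nil then show ?case by simp
next
  case (Cons a hs) then show ?case by (cases hs') auto
qed

lemma enc_inj: "enc p = enc q \<Longrightarrow> p = q"
proof (induction p arbitrary: q)
  case Zero then show ?case by (cases q) auto
next
  case Succ then show ?case by (cases q) auto
next
  case (Proj i) then show ?case by (cases q) auto
next
  case Orc then show ?case by (cases q) auto
next
  case (Comp g hs)
  show ?case
  proof (cases q)
    case (Comp g' hs')
    then have "enc g = enc g'" "list_encode (map enc hs) = list_encode (map enc hs')"
      using Comp.prems by auto
    then have "g = g'" "map enc hs = map enc hs'" using Comp.IH(1) list_encode_eq by auto
    moreover have "hs = hs'" using enc_list_inj[OF Comp.IH(2)] \<open>map enc hs = map enc hs'\<close> by blast
    ultimately show ?thesis using Comp by simp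
  qed (use Comp.prems in auto)
next
  case (PrimRec g h) then show ?case by (cases q) auto
next
  case (Mu g) then show ?case by (cases q) auto
qed

definition Rf :: "rf \<Rightarrow> nat list \<Rightarrow> nat" where
  "Rf e l = (if (l ! 1, l ! 2) \<in> ordT (Tr e (l ! 0)) then 0 else 1)"

lemma rc_Rf: "rc f 3 (Rf e)"
proof -
  have b: "rc f 3 (bvl e 1)" using rc_bvl[of f 1 e] by (simp add: numeral_eq_Suc)
  have TX: "rcp f 3 (\<lambda>l. Tr e (l ! 0) (list_decode (l ! i)))" if i: "i < 3" for i
  proof -
    have r: "rc f 3 (\<lambda>l. bvl e 1 [l ! 0, l ! i, length (list_decode (l ! i))])"
      by (rule rc_comp3[OF b]; (rule rc_len)?; rule rc_proj) (use i in simp_all)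
    show ?thesis
      by (rule rcp_ext[OF rcp_eq[OF r rc_const[of f 3 0]]]) (simp add: bvl_def Tr_def)
  qed
  have K: "rcp f 3 (\<lambda>l. kbf (list_decode (l ! 1)) (list_decode (l ! 2)))"
    by (rule rcp_kb; rule rc_proj) simp_all
  have LT: "rcp f 3 (\<lambda>l. l ! 1 < l ! 2)" by (rule rcp_less; rule rc_proj) simp_all
  have "rcp f 3 (\<lambda>l. (Tr e (l ! 0) (list_decode (l ! 1)) \<and> Tr e (l ! 0) (list_decode (l ! 2)) \<and> kbf (list_decode (l ! 1)) (list_decode (l ! 2))) \<or>
      (Tr e (l ! 0) (list_decode (l ! 1)) \<and> \<not> Tr e (l ! 0) (list_decode (l ! 2))) \<or>
      (\<not> Tr e (l ! 0) (list_decode (l ! 1)) \<and> \<not> Tr e (l ! 0) (list_decode (l ! 2)) \<and> l ! 1 < l ! 2))"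
    by (intro rcp_disj rcp_conj rcp_not TX K LT) simp_all
  then have "rcp f 3 (\<lambda>l. (l ! 1, l ! 2) \<in> ordT (Tr e (l ! 0)))"
    by (rule rcp_ext) (simp add: ordT_def)
  then show ?thesis unfolding rcp_def Rf_def .
qed

definition Pn :: "rf \<Rightarrow> nat \<Rightarrow> rf" where
  "Pn P n = Comp P [cprog n, Proj 0, Proj 1]"

lemma eval_Pn:
  assumes P: "\<forall>l. length l = 3 \<longrightarrow> eval f P l (Rf e l)"
  shows "eval f (Pn P n) [x, y] (Rf e [n, x, y])"
  unfolding Pn_def
proof (rule ev_comp[where ys="[n, x, y]"])
  show "\<forall>i<length [cprog n, Proj 0, Proj 1]. eval f ([cprog n, Proj 0, Proj 1] ! i) [x, y] ([n, x, y] ! i)"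
  proof (intro allI impI)
    fix i assume "i < length [cprog n, Proj 0, Proj 1]"
    then have "i = 0 \<or> i = 1 \<or> i = 2" by auto
    then show "eval f ([cprog n, Proj 0, Proj 1] ! i) [x, y] ([n, x, y] ! i)"
      using eval_cprog ev_proj[of 0 "[x,y]" f] ev_proj[of 1 "[x,y]" f] by auto
  qed
qed (use P in simp_all)

lemma L_Pn:
  assumes P: "\<forall>l. length l = 3 \<longrightarrow> eval (\<lambda>_. 0) P l (Rf e l)"
  shows "L (enc (Pn P n)) = ordT (Tr e n)"
proof -
  have ev: "eval (\<lambda>_. 0) (Pn P n) [x, y] z \<longleftrightarrow> z = Rf e [n, x, y]" for x y z
    using eval_Pn[OF P] eval_det by blast
  have cr: "comp_rel (Pn P n) = ordT (Tr e n)"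
    unfolding comp_rel_def using ev by (auto simp: Rf_def)
  have t: "total2 (Pn P n)" unfolding total2_def using ev by blast
  have "\<exists>p. enc (Pn P n) = enc p \<and> total2 p \<and> strict_linear_order (comp_rel p)"
    using t cr ordT_slo by metis
  moreover have "(THE p. enc (Pn P n) = enc p) = Pn P n"
    using enc_inj by blast
  ultimately show ?thesis unfolding L_def using cr by simp
qed

lemma rc_enc_cprog: "rc f 1 (\<lambda>l. enc (cprog (l ! 0)))"
proof (rule rc_prec'[where k=0 and G="\<lambda>_. enc Zero"
      and H="\<lambda>l. prod_encode (4, prod_encode (enc Succ, Suc (prod_encode (l ! 1, 0))))"])
  show "rc f 0 (\<lambda>_. enc Zero)" by (rule rc_const)
  show "rc f 2 (\<lambda>l. prod_encode (4, prod_encode (enc Succ, Suc (prod_encode (l ! 1, 0)))))"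
    by (intro rc_penc rc_const rc_Suc rc_proj) simp
qed auto

lemma rc_idx: "rc f k A \<Longrightarrow> rc f k (\<lambda>l. enc (Pn P (A l)))"
proof -
  assume A: "rc f k A"
  have c: "rc f k (\<lambda>l. enc (cprog (A l)))" using rc_comp1[OF rc_enc_cprog A] by simp
  have "rc f k (\<lambda>l. prod_encode (4, prod_encode (enc P, Suc (prod_encode (enc (cprog (A l)),
      Suc (prod_encode (enc (Proj 0), Suc (prod_encode (enc (Proj 1), 0)))))))))"
    by (intro rc_penc rc_const rc_Suc c)
  then show ?thesis by (simp add: Pn_def)
qed

lemma eval_mu_least:
  assumes h: "\<And>k. eval f h (k # xs) (G (k # xs))" and k0: "G (k0 # xs) = 0"
  shows "eval f (Mu h) xs (LEAST k. G (k # xs) = 0)"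
proof -
  let ?n = "LEAST k. G (k # xs) = 0"
  have a: "G (?n # xs) = 0" using k0 by (rule LeastI)
  have b: "\<forall>m<?n. \<exists>y. eval f h (m # xs) (Suc y)"
  proof (intro allI impI)
    fix m assume "m < ?n"
    then have "G (m # xs) \<noteq> 0" using not_less_Least by blast
    then obtain y where "G (m # xs) = Suc y" using not0_implies_Suc by blast
    then show "\<exists>y. eval f h (m # xs) (Suc y)" using h by metis
  qed
  have "eval f h (?n # xs) 0" using a h by metis
  then show ?thesis by (rule ev_mu) (use b in auto)
qed

theorem mainTheorem10:
  fixes D :: "nat set"
  assumes "loquaciously_high_ds D"
  shows "\<forall>A. Pi11 A \<longrightarrow> ce_in D A"
proof (intro allI impI)
  fix A assume "Pi11 A"
  then obtain e where e: "\<And>n. n \<in> A \<longleftrightarrow> (\<forall>f. \<exists>y. eval f e [n] y)" unfolding Pi11_def by blast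
  obtain P where P: "\<forall>l. length l = 3 \<longrightarrow> eval (\<lambda>_. 0) P l (Rf e l)"
    using rc_Rf[of "\<lambda>_. 0" e] unfolding rc_def by blast
  obtain \<Phi> g where \<Phi>: "\<And>n k. eval (chi D) \<Phi> [n, k] (g n k)"
    and gd: "\<And>n. \<not> wf (L n) \<Longrightarrow> (\<forall>k. (g n (Suc k), g n k) \<in> L n)"
    using assms unfolding loquaciously_high_ds_def by blast
  define idx where "idx n = enc (Pn P n)" for n
  have Lidx: "L (idx n) = ordT (Tr e n)" for n unfolding idx_def by (rule L_Pn[OF P])
  have inA: "n \<in> A \<longleftrightarrow> wf (ordT (Tr e n))" for n
  proof -
    have w: "\<not> wf (ordT (Tr e n)) \<longleftrightarrow> (\<exists>f. \<forall>s. Tr e n (ftake f s))"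
      by (rule ordT_wf) (erule Tr_closed)
    show ?thesis using e[of n] Tr_path[of e n] w by blast
  qed
  define H where "H l = 1 - Rf e [l ! 1, g (idx (l ! 1)) (Suc (l ! 0)), g (idx (l ! 1)) (l ! 0)]" for l
  have Grc: "rc (chi D) 2 (\<lambda>l. g (l ! 0) (l ! 1))"
    unfolding rc_def
  proof (intro exI allI impI)
    fix xs :: "nat list" assume "length xs = 2"
    then obtain a b where "xs = [a, b]"
      by (metis (no_types, lifting) One_nat_def Suc_length_conv length_0_conv numeral_2_eq_2)
    then show "eval (chi D) \<Phi> xs (g (xs ! 0) (xs ! 1))" using \<Phi> by simp
  qed
  have I: "rc (chi D) 2 (\<lambda>l. idx (l ! 1))" unfolding idx_def by (rule rc_idx, rule rc_proj) simp
  have G1: "rc (chi D) 2 (\<lambda>l. g (idx (l ! 1)) (Suc (l ! 0)))"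
    using rc_comp2[OF Grc I rc_Suc[OF rc_proj[of 0 2]]] by simp
  have G0: "rc (chi D) 2 (\<lambda>l. g (idx (l ! 1)) (l ! 0))"
    using rc_comp2[OF Grc I rc_proj[of 0 2]] by simp
  have R: "rc (chi D) 2 (\<lambda>l. Rf e [l ! 1, g (idx (l ! 1)) (Suc (l ! 0)), g (idx (l ! 1)) (l ! 0)])"
    by (rule rc_comp3[OF rc_Rf rc_proj G1 G0]) simp
  have "rc (chi D) 2 H" unfolding H_def by (rule rc_sub[OF rc_const R])
  then obtain h where h: "\<forall>xs. length xs = 2 \<longrightarrow> eval (chi D) h xs (H xs)" unfolding rc_def by blast
  show "ce_in D A" unfolding ce_in_def
  proof (intro exI allI)
    fix n
    let ?rel = "\<lambda>k. (g (idx n) (Suc k), g (idx n) k) \<in> ordT (Tr e n)"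
    have Hk: "H [k, n] = (if ?rel k then 1 else 0)" for k by (simp add: H_def Rf_def)
    have hk: "eval (chi D) h (k # [n]) (H [k, n])" for k using h by simp
    have halt: "(\<exists>y. eval (chi D) (Mu h) [n] y) \<longleftrightarrow> (\<exists>k. \<not> ?rel k)"
    proof
      assume "\<exists>y. eval (chi D) (Mu h) [n] y"
      then obtain y where "eval (chi D) (Mu h) [n] y" by blast
      then have "eval (chi D) h (y # [n]) 0" by (auto elim: ev_MuE)
      then have "H [y, n] = 0" using hk[of y] eval_det by blast
      then show "\<exists>k. \<not> ?rel k" using Hk[of y] by (auto split: if_splits)
    next
      assume "\<exists>k. \<not> ?rel k"
      then obtain k0 where "\<not> ?rel k0" by blast
      then have "H (k0 # [n]) = 0" using Hk[of k0] by simp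
      then show "\<exists>y. eval (chi D) (Mu h) [n] y" using eval_mu_least[of "chi D" h "[n]" H, OF hk] by blast
    qed
    have "wf (ordT (Tr e n)) \<longleftrightarrow> (\<exists>k. \<not> ?rel k)"
    proof
      assume w: "wf (ordT (Tr e n))"
      show "\<exists>k. \<not> ?rel k"
      proof (rule ccontr)
        assume "\<not> (\<exists>k. \<not> ?rel k)"
        then have "\<forall>k. ((\<lambda>k. g (idx n) k) (Suc k), (\<lambda>k. g (idx n) k) k) \<in> ordT (Tr e n)" by simp
        then show False using w unfolding wf_iff_no_infinite_down_chain by blast
      qed
    next
      assume "\<exists>k. \<not> ?rel k"
      then show "wf (ordT (Tr e n))" using gd[of "idx n"] Lidx[of n] by auto
    qed
    then show "n \<in> A \<longleftrightarrow> (\<exists>y. eval (chi D) (Mu h) [n] y)" using inA[of n] halt by simp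
  qed
qed

end
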